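(* Let $\mathbf v\in\mathbb Z^4$ satisfy $Q_{\mathcal D}(\mathbf v)=4$, and let $\mathcal C$ be the set of all integers occurring as a coordinate of some element of the orbit $\mathcal A[\mathbf v]$ (the curvatures of the corresponding integral hyperbolic Apollonian packing). Then the set of residues modulo $12$ of elements of $\mathcal C$ omits at least three congruence classes modulo $12$.
   Context: $Q_{\mathcal D}(a,b,c,d)=2(a^2+b^2+c^2+d^2)-(a+b+c+d)^2$. $\mathbf S_i$ ($i=1,\dots,4$) is the $4\times4$ integer matrix replacing the $i$-th coordinate $a_i$ of a column vector by $2\sum_{j\ne i}a_j-a_i$, other coordinates fixed; the Apollonian group $\mathcal A$ is the subgroup of $GL(4,\mathbb Z)$ they generate, and $\mathcal A[\mathbf v]=\{\mathbf U\mathbf v:\mathbf U\in\mathcal A\}$. *)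

theory Defs
  imports "HOL-Analysis.Analysis"
begin

definition Q_D :: "int ^ 4 \<Rightarrow> int" where
  "Q_D v = 2 * (\<Sum>i\<in>UNIV. (v $ i)^2) - (\<Sum>i\<in>UNIV. v $ i)^2"

definition apS :: "4 \<Rightarrow> int ^ 4 ^ 4" where
  "apS i = (\<chi> r c. if r = i then (if c = i then -1 else 2)
                    else (if r = c then 1 else 0))"

text \<open>The Apollonian group: the group generated by the S_i. Since every S_i is an
  involution, the generated group equals the generated monoid, which we define inductively.\<close>
inductive_set apollonian_group :: "(int ^ 4 ^ 4) set" where
  ap_id: "mat 1 \<in> apollonian_group"
| ap_step: "U \<in> apollonian_group \<Longrightarrow> apS i ** U \<in> apollonian_group"

definition apollonian_orbit :: "int ^ 4 \<Rightarrow> (int ^ 4) set" where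
  "apollonian_orbit v = {U *v v | U. U \<in> apollonian_group}"

definition curvatures :: "int ^ 4 \<Rightarrow> int set" where
  "curvatures v = {w $ k | w k. w \<in> apollonian_orbit v}"

end

theory Submission
  imports Defs
begin

lemma apS_row_other:
  fixes w :: "int ^ 4"
  assumes "k \<noteq> i"
  shows "(apS i *v w) $ k = w $ k"
proof -
  have "(apS i *v w) $ k = (\<Sum>j\<in>UNIV. (if k = j then 1 else 0) * w $ j)"
    using assms unfolding apS_def matrix_vector_mult_def by (auto intro!: sum.cong)
  also have "\<dots> = (\<Sum>j\<in>UNIV. (if j = k then w $ j else 0))"
    by (rule sum.cong) auto
  finally show ?thesis by simp
qed

lemma apS_row_same:
  fixes w :: "int ^ 4"
  shows "(apS i *v w) $ i = 2 * (\<Sum>c\<in>UNIV. w $ c) - 3 * w $ i"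
proof -
  have "(apS i *v w) $ i = (\<Sum>c\<in>UNIV. (2 - 3 * (if c = i then 1 else 0)) * w $ c)"
    unfolding apS_def matrix_vector_mult_def by (auto intro!: sum.cong)
  also have "\<dots> = (\<Sum>c\<in>UNIV. 2 * w $ c - 3 * (if c = i then w $ c else 0))"
    by (rule sum.cong) (auto simp: algebra_simps)
  also have "\<dots> = (\<Sum>c\<in>UNIV. 2 * w $ c) - (\<Sum>c\<in>UNIV. 3 * (if c = i then w $ c else 0))"
    by (rule sum_subtractf)
  also have "\<dots> = 2 * (\<Sum>c\<in>UNIV. w $ c) - 3 * w $ i"
    by (simp add: sum_distrib_left[symmetric])
  finally show ?thesis .
qed

lemma sum_cong4:
  fixes w v :: "int ^ 4"
  assumes "\<forall>k. 4 dvd (w $ k - v $ k)"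
  shows "4 dvd ((\<Sum>c\<in>UNIV. w $ c) - (\<Sum>c\<in>UNIV. v $ c))"
proof -
  have "4 dvd (\<Sum>c\<in>UNIV. w $ c - v $ c)" using assms by (intro dvd_sum) auto
  then show ?thesis by (simp add: sum_subtractf)
qed

lemma invariant:
  fixes v :: "int ^ 4"
  assumes ev: "even (\<Sum>c\<in>UNIV. v $ c)"
    and U: "U \<in> apollonian_group"
  shows "\<forall>k. 4 dvd ((U *v v) $ k - v $ k)"
  using U
proof (induction rule: apollonian_group.induct)
  case ap_id
  then show ?case by simp
next
  case (ap_step U i)
  define w where "w = U *v v"
  have IH: "\<forall>k. 4 dvd (w $ k - v $ k)" using ap_step.IH w_def by simp
  have "4 dvd ((\<Sum>c\<in>UNIV. w $ c) - (\<Sum>c\<in>UNIV. v $ c))" using sum_cong4[OF IH] .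
  then have d2: "2 dvd ((\<Sum>c\<in>UNIV. w $ c) - (\<Sum>c\<in>UNIV. v $ c))"
    by (rule dvd_trans[rotated]) simp
  have "2 dvd (((\<Sum>c\<in>UNIV. w $ c) - (\<Sum>c\<in>UNIV. v $ c)) + (\<Sum>c\<in>UNIV. v $ c))"
    using d2 ev by (rule dvd_add)
  then have evw: "even (\<Sum>c\<in>UNIV. w $ c)" by simp
  have eq: "(apS i ** U) *v v = apS i *v w"
    by (simp add: w_def matrix_vector_mul_assoc)
  show ?case
  proof
    fix k
    show "4 dvd (((apS i ** U) *v v) $ k - v $ k)"
    proof (cases "k = i")
      case True
      obtain m where m: "(\<Sum>c\<in>UNIV. w $ c) = 2 * m" using evw by blast
      have "((apS i ** U) *v v) $ k - v $ k = 4 * (m - w $ i) + (w $ i - v $ i)"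
        unfolding eq using True m by (simp add: apS_row_same algebra_simps)
      moreover have "4 dvd (4 * (m - w $ i) + (w $ i - v $ i))"
        using IH by (intro dvd_add) simp_all
      ultimately show ?thesis by simp
    next
      case False
      then show ?thesis using eq IH by (simp add: apS_row_other)
    qed
  qed
qed

lemma aux8:
  fixes ra rb rc rd :: int
  assumes "ra = 0 \<or> ra = 1 \<or> ra = 2 \<or> ra = 3" "rb = 0 \<or> rb = 1 \<or> rb = 2 \<or> rb = 3"
    "rc = 0 \<or> rc = 1 \<or> rc = 2 \<or> rc = 3" "rd = 0 \<or> rd = 1 \<or> rd = 2 \<or> rd = 3"
    "0 \<in> {ra, rb, rc, rd}" "1 \<in> {ra, rb, rc, rd}" "2 \<in> {ra, rb, rc, rd}" "3 \<in> {ra, rb, rc, rd}"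
  shows "2 * (ra^2 + rb^2 + rc^2 + rd^2) - (ra + rb + rc + rd)^2 = -8"
  using assms(1-4)
  apply (elim disjE)
  using assms(5-8) by simp_all

lemma residues_not_all:
  fixes a b c d :: int
  assumes "2 * (a^2 + b^2 + c^2 + d^2) - (a + b + c + d)^2 = 4"
  shows "\<exists>r\<in>{0..<4}. r \<notin> {a mod 4, b mod 4, c mod 4, d mod 4}"
proof (rule ccontr)
  assume H: "\<not> ?thesis"
  define ra where "ra = a mod 4"
  define rb where "rb = b mod 4"
  define rc where "rc = c mod 4"
  define rd where "rd = d mod 4"
  define qa where "qa = a div 4"
  define qb where "qb = b div 4"
  define qc where "qc = c div 4"
  define qd where "qd = d div 4"
  have a: "a = 4 * qa + ra" and b: "b = 4 * qb + rb" and c: "c = 4 * qc + rc"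
    and d: "d = 4 * qd + rd" by (simp_all add: ra_def qa_def rb_def qb_def rc_def qc_def rd_def qd_def)
  have rr: "ra \<in> {0..3}" "rb \<in> {0..3}" "rc \<in> {0..3}" "rd \<in> {0..3}"
    by (auto simp: ra_def rb_def rc_def rd_def)
  have cov: "{0..<4} \<subseteq> {ra, rb, rc, rd}" using H by (auto simp: ra_def rb_def rc_def rd_def)
  have key: "2 * (a^2 + b^2 + c^2 + d^2) - (a + b + c + d)^2
      = 2 * (ra^2 + rb^2 + rc^2 + rd^2) - (ra + rb + rc + rd)^2
        + 8 * (4*(qa^2+qb^2+qc^2+qd^2) + 2*(qa*ra+qb*rb+qc*rc+qd*rd)
               - 2*(qa+qb+qc+qd)^2 - (qa+qb+qc+qd)*(ra+rb+rc+rd))"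
    unfolding a b c d by (simp add: power2_eq_square algebra_simps)
  have "2 * (ra^2 + rb^2 + rc^2 + rd^2) - (ra + rb + rc + rd)^2 = -8"
  proof (rule aux8)
    show "ra = 0 \<or> ra = 1 \<or> ra = 2 \<or> ra = 3" using rr by auto
    show "rb = 0 \<or> rb = 1 \<or> rb = 2 \<or> rb = 3" using rr by auto
    show "rc = 0 \<or> rc = 1 \<or> rc = 2 \<or> rc = 3" using rr by auto
    show "rd = 0 \<or> rd = 1 \<or> rd = 2 \<or> rd = 3" using rr by auto
  qed (use subsetD[OF cov, of 0] subsetD[OF cov, of 1] subsetD[OF cov, of 2] subsetD[OF cov, of 3] in simp_all)
  then obtain X where "4 = -8 + 8 * (X::int)"
    using key assms by (metis)
  then have "12 = 8 * X" by simp
  then have "2 * X = 3" by simp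
  then have "even (3::int)" by (metis dvd_triv_left)
  then show False by simp
qed


theorem theorem5p2:
  fixes v :: "int ^ 4"
  assumes "Q_D v = 4"
  shows "card ({0..<12::int} - (\<lambda>c. c mod 12) ` curvatures v) \<ge> 3"
proof -
  have Q: "2 * ((v$1)^2 + (v$2)^2 + (v$3)^2 + (v$4)^2) - (v$1 + v$2 + v$3 + v$4)^2 = 4"
    using assms by (simp add: Q_D_def sum_4)
  then obtain r where r: "r \<in> {0..<4}" "r \<notin> {v$1 mod 4, v$2 mod 4, v$3 mod 4, v$4 mod 4}"
    using residues_not_all by blast
  have rall: "v $ k mod 4 \<noteq> r" for k
  proof -
    have "k = 1 \<or> k = 2 \<or> k = 3 \<or> k = 4" by (rule exhaust_4)
    then show ?thesis using r(2) by (elim disjE) simp_all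
  qed
  have ev: "even (\<Sum>c\<in>UNIV. v $ c)"
  proof -
    have "(v$1 + v$2 + v$3 + v$4)^2 = 2 * (((v$1)^2 + (v$2)^2 + (v$3)^2 + (v$4)^2) - 2)"
      using Q unfolding right_diff_distrib by linarith
    then have "even ((v$1 + v$2 + v$3 + v$4)^2)" by (metis dvd_triv_left)
    then have "even (v$1 + v$2 + v$3 + v$4)" by simp
    then show ?thesis by (simp add: sum_4)
  qed
  have curv: "x mod 4 \<noteq> r" if xin: "x \<in> curvatures v" for x
  proof -
    obtain U k where U: "U \<in> apollonian_group" and x: "x = (U *v v) $ k"
      using xin unfolding curvatures_def apollonian_orbit_def by blast
    have "4 dvd (x - v $ k)" using invariant[OF ev U] x by simp
    then have "x mod 4 = v $ k mod 4" by (metis mod_eq_dvd_iff)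
    then show ?thesis using rall by simp
  qed
  have sub: "{r, r + 4, r + 8} \<subseteq> {0..<12::int} - (\<lambda>c. c mod 12) ` curvatures v"
  proof
    fix y assume y: "y \<in> {r, r + 4, r + 8}"
    have y12: "y \<in> {0..<12}" using y r(1) by auto
    have r0: "r mod 4 = r" using r(1) by simp
    have r4: "(r + 4) mod 4 = r" using r0 by (simp only: mod_add_self2)
    have r8: "(r + 8) mod 4 = r" using r4 mod_add_self2[of "r + 4" 4] by (simp add: add.assoc)
    have ymod: "y mod 4 = r" using y r0 r4 r8 by auto
    have "y \<notin> (\<lambda>c. c mod 12) ` curvatures v"
    proof
      assume "y \<in> (\<lambda>c. c mod 12) ` curvatures v"
      then obtain x where x: "x \<in> curvatures v" "y = x mod 12" by auto
      have "x mod 4 = y mod 4" using x(2) by (simp add: mod_mod_cancel)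
      then show False using curv[OF x(1)] ymod by simp
    qed
    then show "y \<in> {0..<12::int} - (\<lambda>c. c mod 12) ` curvatures v" using y12 by blast
  qed
  have "card {r, r + 4, r + 8} = 3" by simp
  moreover have "card {r, r + 4, r + 8} \<le> card ({0..<12::int} - (\<lambda>c. c mod 12) ` curvatures v)"
    by (rule card_mono[OF _ sub]) simp
  ultimately show ?thesis by simp
qed

end
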